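(* Let $h(x,t)=\phi(x,x_{cl}(t))\chi_{(-x_{cl}(t),x_{cl}(t))}(x)$ be a moving-contact-line solution with $\dot x_{cl}(t)\neq0$, such that $\int_{\mathbb{R}}h(x,t)\,\mathrm{d}x$ is constant in time and, on the interval $(-x_{cl}(t),x_{cl}(t))$, the equation $$\dot x_{cl}\,\frac{\partial\phi}{\partial s}(x,x_{cl})+\frac{\partial}{\partial x}\Big(\phi(x,x_{cl})\,m(\bar h)\,\partial_{xxx}\bar h\Big)=0$$ holds classically, with $\phi(\cdot,x_{cl})\,m(\bar h)\partial_{xxx}\bar h$ extending continuously to $[-x_{cl},x_{cl}]$. If $\phi(x_{cl}(t),x_{cl}(t))\neq0$, then $$\dot x_{cl}(t)=\Big[m(\bar h)\,\partial_{xxx}\bar h\Big]_{x=x_{cl}(t)} .$$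
   Context: Fix $\alpha,\gamma,\mu>0$. $K_2(x)=\frac{1}{4\alpha^2}(\alpha+|x|)e^{-|x|/\alpha}$ is the bi-Helmholtz kernel, $\bar h=K_2*h$, and $m(s)=\frac{\gamma}{3\mu}s^2$. A moving-contact-line solution has the form $h(x,t)=\phi(x,x_{cl}(t))\chi_{(-x_{cl},x_{cl})}(x)$ with $x_{cl}(t)>0$ differentiable, $\phi(x,s)$ continuously differentiable in $(x,s)$ for $|x|\le s$, smooth in $x$, and even in $x$; $\partial\phi/\partial s$ is the derivative in the second argument; $\chi_A$ is the indicator function of $A$. *)

theory Defs
  imports "HOL-Analysis.Analysis"
begin

definition K2 :: "real \<Rightarrow> real \<Rightarrow> real" where
  "K2 \<alpha> x = (\<alpha> + \<bar>x\<bar>) * exp (- \<bar>x\<bar> / \<alpha>) / (4 * \<alpha>\<^sup>2)"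

definition mob :: "real \<Rightarrow> real \<Rightarrow> real \<Rightarrow> real" where
  "mob \<gamma> \<mu> s = \<gamma> / (3 * \<mu>) * s\<^sup>2"

definition hcl :: "(real \<Rightarrow> real \<Rightarrow> real) \<Rightarrow> (real \<Rightarrow> real) \<Rightarrow> real \<Rightarrow> real \<Rightarrow> real" where
  "hcl \<phi> xcl x t = \<phi> x (xcl t) * indicator {- xcl t <..< xcl t} x"

definition hbar :: "real \<Rightarrow> (real \<Rightarrow> real \<Rightarrow> real) \<Rightarrow> real \<Rightarrow> real \<Rightarrow> real" where
  "hbar \<alpha> h x t = integral UNIV (\<lambda>y. K2 \<alpha> (x - y) * h y t)"

definition d3 :: "(real \<Rightarrow> real) \<Rightarrow> real \<Rightarrow> real" where
  "d3 f x = deriv (deriv (deriv f)) x"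

definition cl_dom :: "(real \<times> real) set" where
  "cl_dom = {(x, s). 0 < s \<and> \<bar>x\<bar> \<le> s}"

end

theory Submission imports Defs begin

lemma deriv_fill:
  fixes g g' :: "real \<Rightarrow> real"
  assumes S: "finite S" and cg: "continuous_on UNIV g" and cg': "continuous_on UNIV g'"
    and d: "\<And>x. x \<notin> S \<Longrightarrow> (g has_real_derivative g' x) (at x)"
  shows "(g has_real_derivative g' x) (at x)"
proof -
  have eq: "g y = g (x-1) + integral {x-1..y} g'" if "y \<in> {x-1<..<x+1}" for y
  proof -
    have "(g' has_integral (g y - g (x-1))) {x-1..y}"
      apply (rule fundamental_theorem_of_calculus_interior_strong[OF S])
      using that apply simp
      using d has_real_derivative_iff_has_vector_derivative apply blast
      using continuous_on_subset[OF cg] by blast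
    then show ?thesis by (simp add: integral_unique)
  qed
  have "((\<lambda>u. integral {x-1..u} g') has_vector_derivative g' x) (at x within {x-1..x+1})"
    by (rule integral_has_vector_derivative) (auto intro: continuous_on_subset[OF cg'])
  then have "((\<lambda>u. integral {x-1..u} g') has_real_derivative g' x) (at x)"
    by (simp add: at_within_Icc_at has_real_derivative_iff_has_vector_derivative)
  then have "((\<lambda>u. g (x-1) + integral {x-1..u} g') has_real_derivative g' x) (at x)"
    by (auto intro!: derivative_eq_intros)
  then show ?thesis
    by (rule has_field_derivative_transform_within_open[where S="{x-1<..<x+1}"]) (auto simp: eq)
qed

lemma deriv_abs: assumes x: "(x::real) \<noteq> 0" shows "(abs has_real_derivative sgn x) (at x)"
proof (cases "x > 0")
  case True
  then have s: "sgn x = 1" by simp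
  have "((\<lambda>y. y) has_real_derivative 1) (at x)" by (rule DERIV_ident)
  then have "(abs has_real_derivative 1) (at x)"
    by (rule has_field_derivative_transform_within_open[where S="{0<..}"]) (use True in auto)
  then show ?thesis by (simp only: s)
next
  case False
  with x have "x < 0" by simp
  then have s: "sgn x = -1" by simp
  have "((\<lambda>y. - y) has_real_derivative -1) (at x)" by (rule derivative_eq_intros refl)+
  then have "(abs has_real_derivative -1) (at x)"
    by (rule has_field_derivative_transform_within_open[where S="{..<0}"]) (use \<open>x<0\<close> in auto)
  then show ?thesis by (simp only: s)
qed

definition k1 :: "real \<Rightarrow> real \<Rightarrow> real" where
  "k1 a z = - z * exp (- \<bar>z\<bar> / a) / (4 * a^3)"
definition k2 :: "real \<Rightarrow> real \<Rightarrow> real" where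
  "k2 a z = (\<bar>z\<bar> - a) * exp (- \<bar>z\<bar> / a) / (4 * a^4)"
definition kh :: "real \<Rightarrow> real \<Rightarrow> real" where
  "kh a z = exp (- \<bar>z\<bar> / a) / (2 * a)"

lemma alg1: "(a::real) > 0 \<Longrightarrow> a\<^sup>2 * (sg * E - E * sg * (a + ab) / a) / (4 * a ^ 4) = - (sg*ab) * E / (4 * a ^ 3)"
  by (simp add: field_simps power2_eq_square eval_nat_numeral)
lemma alg2: "(a::real) > 0 \<Longrightarrow> - (a ^ 3 * (E - E * sg * x / a) / (4 * a ^ 6)) = (x * sg - a) * E / (4 * a ^ 4)"
  by (simp add: field_simps power2_eq_square eval_nat_numeral)
lemma K2_deriv:
  assumes a: "a > 0" shows "(K2 a has_real_derivative k1 a z) (at z)"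
proof (rule deriv_fill[where S="{0}"])
  show "continuous_on UNIV (K2 a)" using assms unfolding K2_def by (intro continuous_intros) auto
  show "continuous_on UNIV (k1 a)" using assms unfolding k1_def by (intro continuous_intros) auto
  fix x :: real assume "x \<notin> {0}"
  then have x: "x \<noteq> 0" by simp
  have e: "sgn x * \<bar>x\<bar> = x" by (simp add: sgn_mult_abs)
  show "(K2 a has_real_derivative k1 a x) (at x)" unfolding K2_def[abs_def]
    apply (auto intro!: derivative_eq_intros deriv_abs[OF x])[1]
    using a e alg1[OF a, of "sgn x" "exp (- (\<bar>x\<bar>/a))" "\<bar>x\<bar>"] unfolding k1_def
    by auto
qed simp

lemma k1_deriv:
  assumes a: "a > 0" shows "(k1 a has_real_derivative k2 a z) (at z)"
proof (rule deriv_fill[where S="{0}"])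
  show "continuous_on UNIV (k1 a)" using assms unfolding k1_def by (intro continuous_intros) auto
  show "continuous_on UNIV (k2 a)" using assms unfolding k2_def by (intro continuous_intros) auto
  fix x :: real assume "x \<notin> {0}"
  then have x: "x \<noteq> 0" by simp
  have e: "x * sgn x = \<bar>x\<bar>" by (simp add: abs_sgn)
  show "(k1 a has_real_derivative k2 a x) (at x)" unfolding k1_def[abs_def]
    apply (auto intro!: derivative_eq_intros deriv_abs[OF x])[1]
    using a e alg2[OF a, of "exp (- (\<bar>x\<bar>/a))" "sgn x" x] unfolding k2_def
    by auto
qed simp

lemma k2_eq: "a > 0 \<Longrightarrow> k2 a z = (K2 a z - kh a z) / a^2"
  unfolding k2_def K2_def kh_def by (simp add: field_simps power2_eq_square eval_nat_numeral)

definition clip :: "real \<Rightarrow> real \<Rightarrow> real" where "clip s x = max (-s) (min x s)"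

lemma clip_cont: "continuous_on UNIV (clip s)"
  unfolding clip_def by (intro continuous_intros)

lemma clip_range: "s > 0 \<Longrightarrow> clip s x \<in> {-s..s}"
  unfolding clip_def by auto

lemma Ig_cont:
  fixes g :: "real \<Rightarrow> real"
  assumes s: "s > 0" and cg: "continuous_on {-s..s} g"
  shows "continuous_on UNIV (\<lambda>x. integral {-s..clip s x} g)"
  by (rule continuous_on_compose2[OF indefinite_integral_continuous_1[OF integrable_continuous_real[OF cg]] clip_cont])
     (use clip_range[OF s] in auto)

lemma Ig_deriv:
  fixes g :: "real \<Rightarrow> real"
  assumes s: "s > 0" and cg: "continuous_on {-s..s} g" and x: "x \<notin> {-s, s}"
  shows "((\<lambda>x. integral {-s..clip s x} g) has_real_derivative (if x \<in> {-s<..<s} then g x else 0)) (at x)"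
proof -
  consider "x \<in> {-s<..<s}" | "x > s" | "x < -s" using x by force
  then show ?thesis
  proof cases
    case 1
    have "((\<lambda>u. integral {-s..u} g) has_vector_derivative g x) (at x within {-s..s})"
      by (rule integral_has_vector_derivative[OF cg]) (use 1 in auto)
    then have "((\<lambda>u. integral {-s..u} g) has_real_derivative g x) (at x)"
      using 1 by (simp add: at_within_Icc_at has_real_derivative_iff_has_vector_derivative)
    then have "((\<lambda>x. integral {-s..clip s x} g) has_real_derivative g x) (at x)"
      by (rule has_field_derivative_transform_within_open[where S="{-s<..<s}"]) (use 1 in \<open>auto simp: clip_def\<close>)
    then show ?thesis using 1 by simp
  next
    case 2
    have "((\<lambda>u. integral {-s..s} g) has_real_derivative 0) (at x)" by (rule DERIV_const)
    then have "((\<lambda>x. integral {-s..clip s x} g) has_real_derivative 0) (at x)"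
      by (rule has_field_derivative_transform_within_open[where S="{s<..}"]) (use 2 s in \<open>auto simp: clip_def\<close>)
    then show ?thesis using 2 by simp
  next
    case 3
    have "((\<lambda>u. integral {-s..-s} g) has_real_derivative 0) (at x)" by (rule DERIV_const)
    then have "((\<lambda>x. integral {-s..clip s x} g) has_real_derivative 0) (at x)"
      by (rule has_field_derivative_transform_within_open[where S="{..<-s}"]) (use 3 s in \<open>auto simp: clip_def\<close>)
    then show ?thesis using 3 by simp
  qed
qed

definition QA :: "real \<Rightarrow> real \<Rightarrow> (real \<Rightarrow> real) \<Rightarrow> real \<Rightarrow> real" where
  "QA a s f x = integral {-s..clip s x} (\<lambda>y. exp (y/a) * f y)"
definition QB :: "real \<Rightarrow> real \<Rightarrow> (real \<Rightarrow> real) \<Rightarrow> real \<Rightarrow> real" where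
  "QB a s f x = integral {-s..clip s x} (\<lambda>y. exp (-y/a) * f y)"
definition QT :: "real \<Rightarrow> real \<Rightarrow> (real \<Rightarrow> real) \<Rightarrow> real" where
  "QT a s f = integral {-s..s} (\<lambda>y. exp (-y/a) * f y)"
definition Qf :: "real \<Rightarrow> real \<Rightarrow> (real \<Rightarrow> real) \<Rightarrow> real \<Rightarrow> real" where
  "Qf a s f x = (exp (-x/a) * QA a s f x + exp (x/a) * (QT a s f - QB a s f x)) / (2*a)"
definition Q1 :: "real \<Rightarrow> real \<Rightarrow> (real \<Rightarrow> real) \<Rightarrow> real \<Rightarrow> real" where
  "Q1 a s f x = (- exp (-x/a) * QA a s f x + exp (x/a) * (QT a s f - QB a s f x)) / (2*a^2)"

lemma QA_cont: "a > 0 \<Longrightarrow> s > 0 \<Longrightarrow> continuous_on {-s..s} f \<Longrightarrow> continuous_on UNIV (QA a s f)"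
  unfolding QA_def[abs_def] by (rule Ig_cont) (auto intro!: continuous_intros)
lemma QB_cont: "a > 0 \<Longrightarrow> s > 0 \<Longrightarrow> continuous_on {-s..s} f \<Longrightarrow> continuous_on UNIV (QB a s f)"
  unfolding QB_def[abs_def] by (rule Ig_cont) (auto intro!: continuous_intros)

lemma Q1_cont: "a > 0 \<Longrightarrow> s > 0 \<Longrightarrow> continuous_on {-s..s} f \<Longrightarrow> continuous_on UNIV (Q1 a s f)"
  unfolding Q1_def[abs_def] using QA_cont QB_cont
  by (auto intro!: continuous_intros)
lemma Qf_cont: "a > 0 \<Longrightarrow> s > 0 \<Longrightarrow> continuous_on {-s..s} f \<Longrightarrow> continuous_on UNIV (Qf a s f)"
  unfolding Qf_def[abs_def] using QA_cont QB_cont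
  by (auto intro!: continuous_intros)

lemma Qf_deriv:
  assumes a: "a > 0" and s: "s > 0" and cf: "continuous_on {-s..s} f"
  shows "(Qf a s f has_real_derivative Q1 a s f x) (at x)"
proof (rule deriv_fill[where S="{-s,s}"])
  show "continuous_on UNIV (Qf a s f)" by (rule Qf_cont[OF a s cf])
  show "continuous_on UNIV (Q1 a s f)" by (rule Q1_cont[OF a s cf])
  fix x assume x: "x \<notin> {-s,s}"
  have dA: "(QA a s f has_real_derivative (if x \<in> {-s<..<s} then exp (x/a) * f x else 0)) (at x)"
    unfolding QA_def[abs_def] by (rule Ig_deriv[OF s _ x]) (use a in \<open>auto intro!: continuous_intros cf\<close>)
  have dB: "(QB a s f has_real_derivative (if x \<in> {-s<..<s} then exp (-x/a) * f x else 0)) (at x)"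
    unfolding QB_def[abs_def] by (rule Ig_deriv[OF s _ x]) (use a in \<open>auto intro!: continuous_intros cf\<close>)
  have e: "exp (-x/a) * exp (x/a) = 1" by (simp add: exp_add[symmetric])
  have dE1: "((\<lambda>x. exp (-x/a)) has_real_derivative exp (-x/a) * (-1/a)) (at x)"
    by (rule DERIV_cong[OF DERIV_chain2[OF DERIV_exp, of "\<lambda>x. -x/a" "-1/a" x]])
       (use a in \<open>auto intro!: derivative_eq_intros\<close>)
  have dE2: "((\<lambda>x. exp (x/a)) has_real_derivative exp (x/a) * (1/a)) (at x)"
    by (rule DERIV_cong[OF DERIV_chain2[OF DERIV_exp, of "\<lambda>x. x/a" "1/a" x]])
       (use a in \<open>auto intro!: derivative_eq_intros\<close>)
  have D: "((\<lambda>x. (exp (-x/a) * QA a s f x + exp (x/a) * (QT a s f - QB a s f x)) / (2*a)) has_real_derivative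
     ((exp (-x/a) * (-1/a)) * QA a s f x + (if x \<in> {-s<..<s} then exp (x/a) * f x else 0) * exp (-x/a)
      + ((exp (x/a) * (1/a)) * (QT a s f - QB a s f x) + (0 - (if x \<in> {-s<..<s} then exp (-x/a) * f x else 0)) * exp (x/a))) / (2*a)) (at x)"
    by (intro DERIV_cdivide DERIV_add DERIV_mult dE1 dE2 dA dB DERIV_diff DERIV_const)
  show "(Qf a s f has_real_derivative Q1 a s f x) (at x)"
    unfolding Qf_def[abs_def]
  proof (rule DERIV_cong[OF D])
    have "(if x \<in> {-s<..<s} then exp (x/a) * f x else 0) * exp (-x/a)
      - (if x \<in> {-s<..<s} then exp (-x/a) * f x else 0) * exp (x/a) = 0"
      using e by (auto simp: algebra_simps)
    then show "((exp (-x/a) * (-1/a)) * QA a s f x + (if x \<in> {-s<..<s} then exp (x/a) * f x else 0) * exp (-x/a)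
      + ((exp (x/a) * (1/a)) * (QT a s f - QB a s f x) + (0 - (if x \<in> {-s<..<s} then exp (-x/a) * f x else 0)) * exp (x/a))) / (2*a)
      = Q1 a s f x"
      using a unfolding Q1_def by (simp add: field_simps power2_eq_square)
  qed
qed simp

lemma Q_eq:
  assumes a: "a > 0" and s: "s > 0" and cf: "continuous_on {-s..s} f"
  shows "integral {-s..s} (\<lambda>y. kh a (x-y) * f y) = Qf a s f x"
proof -
  define c where "c = clip s x"
  have c: "-s \<le> c" "c \<le> s" using clip_range[OF s, of x] unfolding c_def by auto
  have i1: "(\<lambda>y. kh a (x-y) * f y) integrable_on {-s..s}"
    unfolding kh_def using a by (intro integrable_continuous_real continuous_intros cf) auto
  have i2: "(\<lambda>y. exp (-y/a) * f y) integrable_on {-s..s}"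
    using a by (intro integrable_continuous_real continuous_intros cf) auto
  have split: "integral {-s..c} (\<lambda>y. kh a (x-y) * f y) + integral {c..s} (\<lambda>y. kh a (x-y) * f y)
      = integral {-s..s} (\<lambda>y. kh a (x-y) * f y)"
    by (rule Henstock_Kurzweil_Integration.integral_combine[OF c i1])
  have splitB: "integral {-s..c} (\<lambda>y. exp (-y/a) * f y) + integral {c..s} (\<lambda>y. exp (-y/a) * f y)
      = QT a s f"
    unfolding QT_def by (rule Henstock_Kurzweil_Integration.integral_combine[OF c i2])
  have p1: "integral {-s..c} (\<lambda>y. kh a (x-y) * f y) = exp (-x/a) / (2*a) * QA a s f x"
  proof (cases "x < -s")
    case True
    then have "c = -s" unfolding c_def clip_def by auto
    then show ?thesis unfolding QA_def c_def[symmetric] by simp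
  next
    case False
    then have cx: "c \<le> x" unfolding c_def clip_def by auto
    have "integral {-s..c} (\<lambda>y. kh a (x-y) * f y) = integral {-s..c} (\<lambda>y. exp (-x/a) / (2*a) * (exp (y/a) * f y))"
    proof (rule integral_cong)
      fix y assume "y \<in> {-s..c}"
      then have yx: "y \<le> x" using cx by auto
      have "- \<bar>x - y\<bar> / a = -x/a + y/a" using yx a by (simp add: field_simps)
      then have "exp (- \<bar>x - y\<bar> / a) = exp (-x/a) * exp (y/a)" by (metis exp_add)
      then show "kh a (x-y) * f y = exp (-x/a) / (2*a) * (exp (y/a) * f y)"
        unfolding kh_def by simp
    qed
    also have "\<dots> = exp (-x/a) / (2*a) * QA a s f x" unfolding QA_def c_def by simp
    finally show ?thesis .
  qed
  have p2: "integral {c..s} (\<lambda>y. kh a (x-y) * f y) = exp (x/a) / (2*a) * (QT a s f - QB a s f x)"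
  proof (cases "x > s")
    case True
    then have "c = s" using s unfolding c_def clip_def by auto
    then show ?thesis using splitB unfolding QB_def c_def[symmetric] by simp
  next
    case False
    then have cx: "x \<le> c" unfolding c_def clip_def by auto
    have "integral {c..s} (\<lambda>y. kh a (x-y) * f y) = integral {c..s} (\<lambda>y. exp (x/a) / (2*a) * (exp (-y/a) * f y))"
    proof (rule integral_cong)
      fix y assume "y \<in> {c..s}"
      then have yx: "x \<le> y" using cx by auto
      have "- \<bar>x - y\<bar> / a = x/a + -y/a" using yx a by (simp add: field_simps)
      then have "exp (- \<bar>x - y\<bar> / a) = exp (x/a) * exp (-y/a)" by (metis exp_add)
      then show "kh a (x-y) * f y = exp (x/a) / (2*a) * (exp (-y/a) * f y)"
        unfolding kh_def by simp
    qed
    also have "\<dots> = exp (x/a) / (2*a) * (QT a s f - QB a s f x)"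
      using splitB unfolding QB_def c_def[symmetric] by simp
    finally show ?thesis .
  qed
  have "integral {-s..s} (\<lambda>y. kh a (x-y) * f y) = exp (-x/a) / (2*a) * QA a s f x + exp (x/a) / (2*a) * (QT a s f - QB a s f x)"
    using split p1 p2 by linarith
  then show ?thesis unfolding Qf_def by (simp add: add_divide_distrib)
qed

lemma H_leibniz:
  fixes kern kern' f :: "real \<Rightarrow> real"
  assumes dk: "\<And>z. (kern has_real_derivative kern' z) (at z)"
    and ck': "continuous_on UNIV kern'"
    and ck: "continuous_on UNIV kern"
    and cf: "continuous_on {-s..s} f"
  shows "((\<lambda>x. integral {-s..s} (\<lambda>y. kern (x-y) * f y)) has_real_derivative
           integral {-s..s} (\<lambda>y. kern' (x-y) * f y)) (at x)"
proof -
  have "((\<lambda>x. integral (cbox (-s) s) (\<lambda>y. kern (x-y) * f y)) has_field_derivative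
           integral (cbox (-s) s) (\<lambda>y. kern' (x-y) * f y)) (at x within UNIV)"
  proof (rule leibniz_rule_field_derivative[where U=UNIV])
    fix x t :: real
    have "((\<lambda>x. kern (x - t)) has_real_derivative kern' (x-t) * 1) (at x)"
      by (rule DERIV_chain2[OF dk]) (auto intro!: derivative_eq_intros)
    then show "((\<lambda>x. kern (x - t) * f t) has_field_derivative kern' (x - t) * f t) (at x within UNIV)"
      using DERIV_cmult_right by fastforce
  next
    fix x :: real
    show "(\<lambda>y. kern (x - y) * f y) integrable_on cbox (- s) s"
      unfolding cbox_interval
      by (intro integrable_continuous_real continuous_intros continuous_on_compose2[OF ck] cf) auto
  next
    have "continuous_on (UNIV \<times> cbox (- s) s) (\<lambda>p. kern' (fst p - snd p) * f (snd p))"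
      unfolding cbox_interval
      by (intro continuous_intros continuous_on_compose2[OF ck'] continuous_on_compose2[OF cf]) auto
    then show "continuous_on (UNIV \<times> cbox (- s) s) (\<lambda>(x, t). kern' (x - t) * f t)"
      by (simp add: case_prod_beta)
  qed auto
  then show ?thesis by (simp add: cbox_interval)
qed

lemma H_even:
  fixes kern f :: "real \<Rightarrow> real"
  assumes ke: "\<And>z. kern (-z) = kern z" and fe: "\<And>y. y \<in> {-s..s} \<Longrightarrow> f (-y) = f y"
  shows "integral {-s..s} (\<lambda>y. kern (-x-y) * f y) = integral {-s..s} (\<lambda>y. kern (x-y) * f y)"
proof -
  have "integral {-s..s} (\<lambda>y. kern (-x-y) * f y) = integral {-s..s} (\<lambda>y. kern (-x-(-y)) * f (-y))"
    using Henstock_Kurzweil_Integration.integral_reflect_real[of s "-s" "\<lambda>y. kern (-x-y) * f y"] by simp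
  also have "\<dots> = integral {-s..s} (\<lambda>y. kern (x-y) * f y)"
  proof (rule integral_cong)
    fix y assume "y \<in> {-s..s}"
    then have "f (-y) = f y" using fe by auto
    moreover have "kern (-x-(-y)) = kern (x-y)" using ke[of "x-y"] by simp
    ultimately show "kern (-x-(-y)) * f (-y) = kern (x-y) * f y" by simp
  qed
  finally show ?thesis by simp
qed

lemma deriv_of_even:
  fixes g g' :: "real \<Rightarrow> real"
  assumes e: "\<And>x. g (-x) = g x" and d: "\<And>x. (g has_real_derivative g' x) (at x)"
  shows "g' (-x) = - g' x"
proof -
  have "((\<lambda>y. g (-y)) has_real_derivative g' (-x) * (-1)) (at x)"
    by (rule DERIV_chain2[OF d]) (auto intro!: derivative_eq_intros)
  then have "(g has_real_derivative g' (-x) * (-1)) (at x)" using e by simp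
  from DERIV_unique[OF this d[of x]] show ?thesis by simp
qed

lemma deriv_of_odd:
  fixes g g' :: "real \<Rightarrow> real"
  assumes e: "\<And>x. g (-x) = - g x" and d: "\<And>x. (g has_real_derivative g' x) (at x)"
  shows "g' (-x) = g' x"
proof -
  have "((\<lambda>y. - g (-y)) has_real_derivative - (g' (-x) * (-1))) (at x)"
    by (intro DERIV_minus DERIV_chain2[OF d]) (auto intro!: derivative_eq_intros)
  then have "(g has_real_derivative - (g' (-x) * (-1))) (at x)" using e by simp
  from DERIV_unique[OF this d[of x]] show ?thesis by simp
qed

lemma K2_cont: "a > 0 \<Longrightarrow> continuous_on UNIV (K2 a)"
  unfolding K2_def by (intro continuous_intros) auto
lemma k1_cont: "a > 0 \<Longrightarrow> continuous_on UNIV (k1 a)"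
  unfolding k1_def by (intro continuous_intros) auto
lemma k2_cont: "a > 0 \<Longrightarrow> continuous_on UNIV (k2 a)"
  unfolding k2_def by (intro continuous_intros) auto

lemma H_all:
  fixes f :: "real \<Rightarrow> real"
  assumes a: "a > 0" and s: "s > 0" and cf: "continuous_on {-s..s} f"
    and fe: "\<And>y. y \<in> {-s..s} \<Longrightarrow> f (-y) = f y"
  defines "H \<equiv> \<lambda>x. integral {-s..s} (\<lambda>y. K2 a (x-y) * f y)"
    and "H1 \<equiv> \<lambda>x. integral {-s..s} (\<lambda>y. k1 a (x-y) * f y)"
    and "H3 \<equiv> \<lambda>x. (integral {-s..s} (\<lambda>y. k1 a (x-y) * f y) - Q1 a s f x) / a^2"
  shows "continuous_on UNIV H" "continuous_on UNIV H3" "\<And>x. H (-x) = H x"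
    "\<And>x. H3 (-x) = - H3 x" "d3 H = H3"
proof -
  define H2 where "H2 = (\<lambda>x. integral {-s..s} (\<lambda>y. k2 a (x-y) * f y))"
  have d1: "\<And>x. (H has_real_derivative H1 x) (at x)"
    unfolding H_def H1_def by (rule H_leibniz[OF K2_deriv[OF a] k1_cont[OF a] K2_cont[OF a] cf])
  have d2: "\<And>x. (H1 has_real_derivative H2 x) (at x)"
    unfolding H2_def H1_def by (rule H_leibniz[OF k1_deriv[OF a] k2_cont[OF a] k1_cont[OF a] cf])
  have H2eq: "H2 x = (H x - Qf a s f x) / a^2" for x
  proof -
    have i1: "(\<lambda>y. K2 a (x-y) * f y) integrable_on {-s..s}"
      by (intro integrable_continuous_real continuous_intros continuous_on_compose2[OF K2_cont[OF a]] cf) auto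
    have i2: "(\<lambda>y. kh a (x-y) * f y) integrable_on {-s..s}"
      unfolding kh_def using a by (intro integrable_continuous_real continuous_intros cf) auto
    have "H2 x = integral {-s..s} (\<lambda>y. (K2 a (x-y) * f y - kh a (x-y) * f y) / a^2)"
      unfolding H2_def by (rule integral_cong) (simp only: k2_eq[OF a] times_divide_eq_left left_diff_distrib)
    also have "\<dots> = (H x - integral {-s..s} (\<lambda>y. kh a (x-y) * f y)) / a^2"
      unfolding H_def using Henstock_Kurzweil_Integration.integral_diff[OF i1 i2]
      by (simp only: integral_divide)
    also have "\<dots> = (H x - Qf a s f x) / a^2" using Q_eq[OF a s cf] by simp
    finally show ?thesis .
  qed
  have d3': "\<And>x. (H2 has_real_derivative H3 x) (at x)"
  proof -
    fix x
    have "((\<lambda>x. (H x - Qf a s f x) / a^2) has_real_derivative (H1 x - Q1 a s f x) / a^2) (at x)"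
      by (intro DERIV_cdivide DERIV_diff d1 Qf_deriv[OF a s cf])
    then show "(H2 has_real_derivative H3 x) (at x)" using H2eq unfolding H3_def H1_def
      by (metis (no_types, lifting) ext)
  qed
  show "continuous_on UNIV H"
    using d1 by (meson DERIV_isCont continuous_at_imp_continuous_on)
  have cH1: "continuous_on UNIV H1"
    using d2 by (meson DERIV_isCont continuous_at_imp_continuous_on)
  have H3eq: "H3 = (\<lambda>x. (H1 x - Q1 a s f x) / a^2)" unfolding H3_def H1_def by simp
  show "continuous_on UNIV H3" unfolding H3eq
    using a by (intro continuous_intros cH1 Q1_cont[OF a s cf]) auto
  show He: "\<And>x. H (-x) = H x"
    unfolding H_def by (rule H_even[where f=f and s=s, OF _ fe]) (simp add: K2_def)
  have H1o: "\<And>x. H1 (-x) = - H1 x" by (rule deriv_of_even[OF He d1])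
  have H2e: "\<And>x. H2 (-x) = H2 x" by (rule deriv_of_odd[OF H1o d2])
  show "\<And>x. H3 (-x) = - H3 x" by (rule deriv_of_even[OF H2e d3'])
  have "deriv H = H1" using d1 DERIV_imp_deriv by blast
  moreover have "deriv H1 = H2" using d2 DERIV_imp_deriv by blast
  moreover have "deriv H2 = H3" using d3' DERIV_imp_deriv by blast
  ultimately show "d3 H = H3" unfolding d3_def by (simp only:)
qed

lemma restrict_lemma:
  fixes g :: "real \<Rightarrow> real"
  shows "integral UNIV (\<lambda>x. g x * indicator {a<..<b} x) = integral {a..b} g"
proof -
  have "(\<lambda>x. g x * indicator {a<..<b} x) = (\<lambda>x. if x \<in> {a<..<b} then g x else 0)"
    by (auto simp: indicator_def fun_eq_iff)
  then show ?thesis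
    by (simp only: integral_restrict_UNIV integral_open_interval_real)
qed

lemma stretch_lemma:
  fixes g :: "real \<Rightarrow> real"
  assumes s: "s > 0"
  shows "integral {-s..s} g = s * integral {-1..1} (\<lambda>u. g (s*u))"
proof -
  have img: "(\<lambda>x. x / s) ` {-s..s} = {-1..1}"
  proof
    show "(\<lambda>x. x / s) ` {-s..s} \<subseteq> {-1..1}" using s by (auto simp: divide_le_eq le_divide_eq)
    show "{-1..1} \<subseteq> (\<lambda>x. x / s) ` {-s..s}"
    proof
      fix u :: real assume "u \<in> {-1..1}"
      then have u1: "-1 \<le> u" "u \<le> 1" by auto
      have "s*(-1) \<le> s*u" using u1 s by (intro mult_left_mono) auto
      moreover have "s*u \<le> s*1" using u1 s by (intro mult_left_mono) auto
      ultimately have "s*u \<in> {-s..s}" by simp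
      moreover have "u = (s*u)/s" using s by simp
      ultimately show "u \<in> (\<lambda>x. x / s) ` {-s..s}" by blast
    qed
  qed
  have "integral {-1..1} (\<lambda>u. g (s*u)) = (1 / \<bar>s\<bar>) *\<^sub>R integral {-s..s} g"
    using integral_stretch_real[where m=s and f=g and a="-s" and b=s] s img by simp
  then show ?thesis using s by simp
qed

theorem mainTheorem3:
  fixes \<alpha> \<gamma> \<mu> :: real
    and \<phi> \<phi>x \<phi>s :: "real \<Rightarrow> real \<Rightarrow> real"
    and xcl xd :: "real \<Rightarrow> real"
    and T :: "real set" and t0 :: real
  assumes "\<alpha> > 0" "\<gamma> > 0" "\<mu> > 0"
    and "open T" "t0 \<in> T"
    and xcl_pos: "\<forall>t\<in>T. xcl t > 0"
    and xcl_deriv: "\<forall>t\<in>T. (xcl has_real_derivative xd t) (at t)"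
    and xd_nz: "\<forall>t\<in>T. xd t \<noteq> 0"
    and phi_C1: "\<forall>p\<in>cl_dom. ((\<lambda>q. \<phi> (fst q) (snd q)) has_derivative
                  (\<lambda>v. \<phi>x (fst p) (snd p) * fst v + \<phi>s (fst p) (snd p) * snd v)) (at p within cl_dom)"
    and "continuous_on cl_dom (\<lambda>q. \<phi>x (fst q) (snd q))"
    and "continuous_on cl_dom (\<lambda>q. \<phi>s (fst q) (snd q))"
    and phi_smooth: "\<forall>s>0. \<forall>n. \<forall>x\<in>{-s<..<s}. (deriv ^^ n) (\<lambda>y. \<phi> y s) differentiable (at x)"
    and phi_even: "\<forall>s>0. \<forall>x. \<bar>x\<bar> \<le> s \<longrightarrow> \<phi> (- x) s = \<phi> x s"
    and mass: "\<exists>M. \<forall>t\<in>T. integral UNIV (\<lambda>x. hcl \<phi> xcl x t) = M"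
    and eqn: "\<forall>t\<in>T. \<forall>x\<in>{- xcl t <..< xcl t}.
       ((\<lambda>y. \<phi> y (xcl t) * mob \<gamma> \<mu> (hbar \<alpha> (hcl \<phi> xcl) y t)
               * d3 (\<lambda>z. hbar \<alpha> (hcl \<phi> xcl) z t) y)
        has_real_derivative (- (xd t * \<phi>s x (xcl t)))) (at x)"
    and ext: "\<forall>t\<in>T. \<exists>G. continuous_on {- xcl t .. xcl t} G \<and>
       (\<forall>x\<in>{- xcl t <..< xcl t}. G x = \<phi> x (xcl t) * mob \<gamma> \<mu> (hbar \<alpha> (hcl \<phi> xcl) x t)
               * d3 (\<lambda>z. hbar \<alpha> (hcl \<phi> xcl) z t) x)"
    and "\<phi> (xcl t0) (xcl t0) \<noteq> 0"
  shows "xd t0 = mob \<gamma> \<mu> (hbar \<alpha> (hcl \<phi> xcl) (xcl t0) t0)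
                 * d3 (\<lambda>z. hbar \<alpha> (hcl \<phi> xcl) z t0) (xcl t0)"
proof -
  note a = \<open>\<alpha> > 0\<close>
  define s where "s = xcl t0"
  have s: "s > 0" using xcl_pos \<open>t0 \<in> T\<close> unfolding s_def by blast
  define f where "f = (\<lambda>y. \<phi> y s)"
  have PhiC: "continuous_on cl_dom (\<lambda>q. \<phi> (fst q) (snd q))"
    by (rule has_derivative_continuous_on) (use phi_C1 in blast)
  have PhixC: "continuous_on cl_dom (\<lambda>q. \<phi>x (fst q) (snd q))" by fact
  have PhisC: "continuous_on cl_dom (\<lambda>q. \<phi>s (fst q) (snd q))" by fact
  have "continuous_on {-s..s} (\<lambda>y. \<phi> (fst (y,s)) (snd (y,s)))"
    by (rule continuous_on_compose2[OF PhiC]) (use s in \<open>auto intro!: continuous_intros simp: cl_dom_def\<close>)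
  then have cf: "continuous_on {-s..s} f" by (simp add: f_def)
  have fe: "\<And>y. y \<in> {-s..s} \<Longrightarrow> f (-y) = f y"
    unfolding f_def using phi_even s by auto
  define H where "H = (\<lambda>x. integral {-s..s} (\<lambda>y. K2 \<alpha> (x-y) * f y))"
  define H3 where "H3 = (\<lambda>x. (integral {-s..s} (\<lambda>y. k1 \<alpha> (x-y) * f y) - Q1 \<alpha> s f x) / \<alpha>^2)"
  note HA0 = H_all[OF a s cf fe]
  have HA1: "continuous_on UNIV H" using HA0(1) unfolding H_def .
  have HA2: "continuous_on UNIV H3" using HA0(2) unfolding H3_def .
  have HA3: "\<And>x. H (-x) = H x" using HA0(3) unfolding H_def .
  have HA4: "\<And>x. H3 (-x) = - H3 x" using HA0(4) unfolding H3_def .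
  have HA5: "d3 H = H3" using HA0(5) unfolding H_def H3_def .
  have hb: "(\<lambda>z. hbar \<alpha> (hcl \<phi> xcl) z t0) = H"
  proof
    fix z
    have "hbar \<alpha> (hcl \<phi> xcl) z t0 = integral UNIV (\<lambda>y. (K2 \<alpha> (z - y) * f y) * indicator {-s<..<s} y)"
      unfolding hbar_def hcl_def f_def s_def by (simp add: mult.assoc)
    also have "\<dots> = H z" unfolding H_def by (rule restrict_lemma)
    finally show "hbar \<alpha> (hcl \<phi> xcl) z t0 = H z" .
  qed
  have hbp: "\<And>z. hbar \<alpha> (hcl \<phi> xcl) z t0 = H z" using hb by meson
  have d3H: "d3 (\<lambda>z. hbar \<alpha> (hcl \<phi> xcl) z t0) = H3" using hb HA5 by simp
  define F where "F = (\<lambda>x. f x * mob \<gamma> \<mu> (H x) * H3 x)"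
  have cF: "continuous_on {-s..s} F"
    unfolding F_def mob_def
    by (intro continuous_intros cf continuous_on_subset[OF HA1] continuous_on_subset[OF HA2]) auto
  obtain G where cG: "continuous_on {-s..s} G"
    and GF0: "\<forall>x\<in>{-s<..<s}. G x = \<phi> x (xcl t0) * mob \<gamma> \<mu> (hbar \<alpha> (hcl \<phi> xcl) x t0)
               * d3 (\<lambda>z. hbar \<alpha> (hcl \<phi> xcl) z t0) x"
    using ext \<open>t0 \<in> T\<close> unfolding s_def by blast
  have GF: "\<And>x. x \<in> {-s<..<s} \<Longrightarrow> G x = F x"
    using GF0 unfolding d3H F_def f_def s_def by (simp add: hbp)
  have GFc: "G x = F x" if "x \<in> {-s..s}" for x
  proof -
    have c: "continuous_on (closure {-s<..<s}) (\<lambda>x. G x - F x)"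
      using s cG cF by (auto intro!: continuous_intros)
    have m: "x \<in> closure {-s<..<s}" using s that by simp
    have "G x - F x = 0"
      by (rule continuous_constant_on_closure[OF c _ m]) (simp add: GF)
    then show ?thesis by simp
  qed
  have Fodd: "F (-s) = - F s"
  proof -
    have "f (-s) = f s" using fe s by auto
    then show ?thesis unfolding F_def using HA3[of s] HA4[of s] by simp
  qed
  have dG: "(G has_real_derivative -(xd t0 * \<phi>s x s)) (at x)" if x: "x \<in> {-s<..<s}" for x
  proof -
    have "((\<lambda>y. \<phi> y (xcl t0) * mob \<gamma> \<mu> (hbar \<alpha> (hcl \<phi> xcl) y t0)
               * d3 (\<lambda>z. hbar \<alpha> (hcl \<phi> xcl) z t0) y)
        has_real_derivative (- (xd t0 * \<phi>s x (xcl t0)))) (at x)"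
      using eqn \<open>t0 \<in> T\<close> x unfolding s_def by blast
    then have "(F has_real_derivative -(xd t0 * \<phi>s x s)) (at x)"
      unfolding d3H F_def f_def s_def by (simp add: hbp)
    then show ?thesis
      by (rule has_field_derivative_transform_within_open[where S="{-s<..<s}"]) (use x GF in auto)
  qed
  define I where "I = integral {-1..1} (\<lambda>u. \<phi>s (s*u) s)"
  have map1: "(\<lambda>u. (s*u, s)) ` {-1..1} \<subseteq> cl_dom"
  proof
    fix p assume "p \<in> (\<lambda>u. (s*u, s)) ` {-1..1}"
    then obtain u where u: "u \<in> {-1..1}" "p = (s*u, s)" by auto
    have "\<bar>s*u\<bar> \<le> s" using u(1) s by (auto simp: abs_mult mult_left_le)
    then show "p \<in> cl_dom" using u s by (simp add: cl_dom_def)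
  qed
  have hI: "((\<lambda>u. \<phi>s (s*u) s) has_integral I) {-1..1}"
    unfolding I_def
  proof (intro integrable_integral integrable_continuous_real)
    have "continuous_on {-1..1} (\<lambda>u. \<phi>s (fst (s*u,s)) (snd (s*u,s)))"
      by (rule continuous_on_compose2[OF PhisC _ map1]) (auto intro!: continuous_intros)
    then show "continuous_on {-1..1} (\<lambda>u. \<phi>s (s*u) s)" by simp
  qed
  have hV: "((\<lambda>u. -(xd t0 * \<phi>s (s*u) s) * s) has_integral (G (s*1) - G (s*(-1)))) {-1..1}"
  proof (rule fundamental_theorem_of_calculus_interior)
    show "continuous_on {-1..1} (\<lambda>u. G (s*u))"
      by (rule continuous_on_compose2[OF cG]) (use s map1 in \<open>auto intro!: continuous_intros\<close>)
  next
    fix u :: real assume u: "u \<in> {-1<..<1}"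
    have "s*(-1) < s*u" "s*u < s*1" using mult_strict_left_mono[of "-1" u s] mult_strict_left_mono[of u 1 s] u s by auto
    then have "s*u \<in> {-s<..<s}" by simp
    have ds: "((\<lambda>u. s*u) has_real_derivative s) (at u)" by (auto intro!: derivative_eq_intros)
    have "((\<lambda>u. G (s*u)) has_real_derivative -(xd t0 * \<phi>s (s*u) s) * s) (at u)"
      by (rule DERIV_chain2[where g="\<lambda>u. s*u", OF dG[OF \<open>s*u \<in> _\<close>] ds])
    then show "((\<lambda>u. G (s*u)) has_vector_derivative -(xd t0 * \<phi>s (s*u) s) * s) (at u)"
      by (simp add: has_real_derivative_iff_has_vector_derivative)
  qed simp
  define J where "J = (\<lambda>\<sigma>. integral {-1..1} (\<lambda>u. \<phi> (\<sigma>*u) \<sigma>))"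
  define DJ where "DJ = (\<lambda>\<sigma> u. \<phi>x (\<sigma>*u) \<sigma> * u + \<phi>s (\<sigma>*u) \<sigma>)"
  have map2: "(\<sigma>*u, \<sigma>) \<in> cl_dom" if "\<sigma> > 0" "u \<in> {-1..1}" for \<sigma> u
  proof -
    have "\<bar>u\<bar> \<le> 1" using that(2) by auto
    then have "\<sigma>*\<bar>u\<bar> \<le> \<sigma>*1" by (rule mult_left_mono) (use that in auto)
    then have "\<bar>\<sigma>*u\<bar> \<le> \<sigma>" using that(1) by (simp add: abs_mult)
    then show ?thesis using that by (simp add: cl_dom_def)
  qed
  have mapU: "(\<lambda>p. (fst p * snd p, fst p)) ` ({0<..} \<times> {-1..1::real}) \<subseteq> cl_dom"
  proof
    fix q assume "q \<in> (\<lambda>p. (fst p * snd p, fst p)) ` ({0<..} \<times> {-1..1::real})"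
    then obtain \<sigma> u where su: "\<sigma> > 0" "u \<in> {-1..1}" "q = (\<sigma>*u, \<sigma>)" by auto
    show "q \<in> cl_dom" unfolding su(3) by (rule map2[OF su(1,2)])
  qed
  have dJ0: "(J has_field_derivative integral (cbox (-1) 1) (DJ s)) (at s within {0<..})"
    unfolding J_def cbox_interval[symmetric]
  proof (rule leibniz_rule_field_derivative[where U="{0<..}"])
    fix \<sigma> u :: real assume \<sigma>: "\<sigma> \<in> {0<..}" and u: "u \<in> cbox (-1) 1"
    have pd: "((\<lambda>\<sigma>. (\<sigma>*u, \<sigma>)) has_derivative (\<lambda>h. (h*u, h))) (at \<sigma> within {0<..})"
      by (auto intro!: derivative_eq_intros)
    have u': "u \<in> {-1..1}" using u by simp
    have img: "(\<lambda>\<sigma>. (\<sigma>*u, \<sigma>)) ` {0<..} \<subseteq> cl_dom" using map2[OF _ u'] by blast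
    have "((\<lambda>\<sigma>. \<phi> (fst (\<sigma>*u, \<sigma>)) (snd (\<sigma>*u, \<sigma>))) has_derivative
       (\<lambda>h. \<phi>x (fst (\<sigma>*u, \<sigma>)) (snd (\<sigma>*u, \<sigma>)) * fst (h*u, h) + \<phi>s (fst (\<sigma>*u, \<sigma>)) (snd (\<sigma>*u, \<sigma>)) * snd (h*u, h)))
       (at \<sigma> within {0<..})"
      by (rule has_derivative_in_compose2[OF _ img \<sigma> pd]) (use phi_C1 in blast)
    then have "((\<lambda>\<sigma>. \<phi> (\<sigma>*u) \<sigma>) has_derivative (\<lambda>h. \<phi>x (\<sigma>*u) \<sigma> * (h*u) + \<phi>s (\<sigma>*u) \<sigma> * h)) (at \<sigma> within {0<..})"
      by simp
    then show "((\<lambda>\<sigma>. \<phi> (\<sigma>*u) \<sigma>) has_field_derivative DJ \<sigma> u) (at \<sigma> within {0<..})"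
      unfolding has_field_derivative_def DJ_def
      by (rule has_derivative_eq_rhs) (auto simp: fun_eq_iff algebra_simps)
  next
    fix \<sigma> :: real assume \<sigma>: "\<sigma> \<in> {0<..}"
    have img: "(\<lambda>u. (\<sigma>*u, \<sigma>)) ` {-1..1} \<subseteq> cl_dom" using map2 \<sigma> by blast
    have "continuous_on {-1..1} (\<lambda>u. \<phi> (fst (\<sigma>*u, \<sigma>)) (snd (\<sigma>*u, \<sigma>)))"
      by (rule continuous_on_compose2[OF PhiC _ img]) (auto intro!: continuous_intros)
    then show "(\<lambda>u. \<phi> (\<sigma>*u) \<sigma>) integrable_on cbox (-1) 1"
      by (simp add: integrable_continuous_real)
  next
    have c1: "continuous_on ({0<..} \<times> {-1..1}) (\<lambda>p. \<phi>x (fst (fst p * snd p, fst p)) (snd (fst p * snd p, fst p)))"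
      by (rule continuous_on_compose2[OF PhixC _ mapU]) (auto intro!: continuous_intros)
    have c2: "continuous_on ({0<..} \<times> {-1..1}) (\<lambda>p. \<phi>s (fst (fst p * snd p, fst p)) (snd (fst p * snd p, fst p)))"
      by (rule continuous_on_compose2[OF PhisC _ mapU]) (auto intro!: continuous_intros)
    have "continuous_on ({0<..} \<times> {-1..1}) (\<lambda>p. \<phi>x (fst p * snd p) (fst p) * snd p + \<phi>s (fst p * snd p) (fst p))"
      using c1 c2 by (auto intro!: continuous_intros)
    then show "continuous_on ({0<..} \<times> cbox (-1) 1) (\<lambda>(\<sigma>, u). DJ \<sigma> u)"
      by (simp add: DJ_def case_prod_beta)
  qed (use s in auto)
  define J' where "J' = integral {-1..1} (DJ s)"
  have dJ: "(J has_real_derivative J') (at s)"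
    using dJ0 at_within_open[of s "{0<..}"] s unfolding J'_def cbox_interval by simp
  define P where "P = (\<lambda>\<sigma>. \<sigma> * J \<sigma>)"
  have Pmass: "integral UNIV (\<lambda>x. hcl \<phi> xcl x t) = P (xcl t)" if t: "t \<in> T" for t
  proof -
    have st: "xcl t > 0" using xcl_pos t by blast
    have "integral UNIV (\<lambda>x. hcl \<phi> xcl x t) = integral {-xcl t..xcl t} (\<lambda>x. \<phi> x (xcl t))"
      unfolding hcl_def by (rule restrict_lemma)
    also have "\<dots> = xcl t * integral {-1..1} (\<lambda>u. \<phi> (xcl t * u) (xcl t))"
      by (rule stretch_lemma[OF st])
    finally show ?thesis unfolding P_def J_def .
  qed
  obtain M0 where M0: "\<forall>t\<in>T. integral UNIV (\<lambda>x. hcl \<phi> xcl x t) = M0" using mass by blast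
  have dP: "(P has_real_derivative (1 * J s + J' * s)) (at s)"
    unfolding P_def by (rule DERIV_mult[OF DERIV_ident dJ])
  have dxt: "(xcl has_real_derivative xd t0) (at t0)" using xcl_deriv \<open>t0 \<in> T\<close> by blast
  have d1: "((\<lambda>t. P (xcl t)) has_real_derivative (1 * J s + J' * s) * xd t0) (at t0)"
    by (rule DERIV_chain2[OF dP[unfolded s_def] dxt, folded s_def])
  have d2: "((\<lambda>t. P (xcl t)) has_real_derivative 0) (at t0)"
    by (rule has_field_derivative_transform_within_open[OF DERIV_const \<open>open T\<close> \<open>t0 \<in> T\<close>])
       (use M0 Pmass in auto)
  have "(1 * J s + J' * s) * xd t0 = 0" using DERIV_unique[OF d1 d2] .
  then have PJ: "J s + J' * s = 0" using xd_nz \<open>t0 \<in> T\<close> by auto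
  have hW: "((\<lambda>u. 1 * \<phi> (s*u) s + (\<phi>x (s*u) s * s) * u) has_integral (1 * \<phi> (s*1) s - (-1) * \<phi> (s*(-1)) s)) {-1..1}"
  proof (rule fundamental_theorem_of_calculus)
    fix u :: real assume u: "u \<in> {-1..1}"
    have pd: "((\<lambda>u. (s*u, s)) has_derivative (\<lambda>h. (s*h, 0))) (at u within {-1..1})"
      by (auto intro!: derivative_eq_intros)
    have "((\<lambda>u. \<phi> (fst (s*u, s)) (snd (s*u, s))) has_derivative
       (\<lambda>h. \<phi>x (fst (s*u, s)) (snd (s*u, s)) * fst (s*h, 0::real) + \<phi>s (fst (s*u, s)) (snd (s*u, s)) * snd (s*h, 0::real)))
       (at u within {-1..1})"
      by (rule has_derivative_in_compose2[OF _ map1 u pd]) (use phi_C1 in blast)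
    then have "((\<lambda>u. \<phi> (s*u) s) has_derivative (\<lambda>h. \<phi>x (s*u) s * (s*h))) (at u within {-1..1})"
      by simp
    then have "((\<lambda>u. \<phi> (s*u) s) has_real_derivative \<phi>x (s*u) s * s) (at u within {-1..1})"
      unfolding has_field_derivative_def
      by (rule has_derivative_eq_rhs) (auto simp: fun_eq_iff algebra_simps)
    then have "((\<lambda>u. u * \<phi> (s*u) s) has_real_derivative 1 * \<phi> (s*u) s + (\<phi>x (s*u) s * s) * u) (at u within {-1..1})"
      by (rule DERIV_mult[OF DERIV_ident])
    then show "((\<lambda>u. u * \<phi> (s*u) s) has_vector_derivative 1 * \<phi> (s*u) s + (\<phi>x (s*u) s * s) * u) (at u within {-1..1})"
      by (simp add: has_real_derivative_iff_has_vector_derivative)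
  qed simp
  have hJ: "((\<lambda>u. \<phi> (s*u) s) has_integral J s) {-1..1}"
  proof -
    have img: "(\<lambda>u. (s*u, s)) ` {-1..1} \<subseteq> cl_dom" by (rule map1)
    have "continuous_on {-1..1} (\<lambda>u. \<phi> (fst (s*u, s)) (snd (s*u, s)))"
      by (rule continuous_on_compose2[OF PhiC _ img]) (auto intro!: continuous_intros)
    then show ?thesis unfolding J_def
      by (simp add: integrable_continuous_real integrable_integral)
  qed
  have hJ': "(DJ s has_integral J') {-1..1}"
  proof -
    have c1: "continuous_on {-1..1} (\<lambda>u. \<phi>x (fst (s*u, s)) (snd (s*u, s)))"
      by (rule continuous_on_compose2[OF PhixC _ map1]) (auto intro!: continuous_intros)
    have c2: "continuous_on {-1..1} (\<lambda>u. \<phi>s (fst (s*u, s)) (snd (s*u, s)))"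
      by (rule continuous_on_compose2[OF PhisC _ map1]) (auto intro!: continuous_intros)
    have "continuous_on {-1..1} (DJ s)" unfolding DJ_def using c1 c2
      by (auto intro!: continuous_intros)
    then show ?thesis unfolding J'_def
      by (simp add: integrable_continuous_real integrable_integral)
  qed
  have A1: "((\<lambda>u. \<phi> (s*u) s + DJ s u * s) has_integral (J s + J' * s)) {-1..1}"
    using has_integral_add[OF hJ has_integral_mult_left[OF hJ', of s]] by simp
  have A2: "((\<lambda>u. (1 * \<phi> (s*u) s + (\<phi>x (s*u) s * s) * u) + \<phi>s (s*u) s * s) has_integral
       ((1 * \<phi> (s*1) s - (-1) * \<phi> (s*(-1)) s) + I * s)) {-1..1}"
    using has_integral_add[OF hW has_integral_mult_left[OF hI, of s]] by simp
  have feq: "(\<lambda>u. \<phi> (s*u) s + DJ s u * s) = (\<lambda>u. (1 * \<phi> (s*u) s + (\<phi>x (s*u) s * s) * u) + \<phi>s (s*u) s * s)"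
    unfolding DJ_def by (simp add: fun_eq_iff algebra_simps)
  have E1: "J s + J' * s = (1 * \<phi> (s*1) s - (-1) * \<phi> (s*(-1)) s) + I * s"
    by (rule has_integral_unique[OF A1[unfolded feq] A2])
  have phs: "\<phi> (-s) s = \<phi> s s" using phi_even s by auto
  have E2: "\<phi> s s * 2 + I * s = 0" using E1 PJ phs by simp
  have A3: "((\<lambda>u. \<phi>s (s*u) s * (-(xd t0 * s))) has_integral I * (-(xd t0 * s))) {-1..1}"
    by (rule has_integral_mult_left[OF hI])
  have feq2: "(\<lambda>u. \<phi>s (s*u) s * (-(xd t0 * s))) = (\<lambda>u. -(xd t0 * \<phi>s (s*u) s) * s)"
    by (simp add: fun_eq_iff algebra_simps)
  have E3: "I * (-(xd t0 * s)) = G (s*1) - G (s*(-1))"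
    by (rule has_integral_unique[OF A3[unfolded feq2] hV])
  have Gs: "G s = F s" "G (-s) = F (-s)" using GFc s by auto
  have E4: "2 * F s = xd t0 * (\<phi> s s * 2)"
  proof -
    have "G s - G (-s) = 2 * F s" using Gs Fodd by simp
    moreover have Is: "I * s = - (\<phi> s s * 2)" using E2 by linarith
    moreover have "I * (-(xd t0 * s)) = - ((I * s) * xd t0)" by (simp add: algebra_simps)
    ultimately have "2 * F s = - ((- (\<phi> s s * 2)) * xd t0)" using E3 by simp
    then show ?thesis by (simp add: algebra_simps)
  qed
  have Fs: "F s = \<phi> s s * (mob \<gamma> \<mu> (H s) * H3 s)" unfolding F_def f_def by simp
  have "\<phi> s s \<noteq> 0" using \<open>\<phi> (xcl t0) (xcl t0) \<noteq> 0\<close> unfolding s_def .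
  then have "xd t0 = mob \<gamma> \<mu> (H s) * H3 s" using E4 Fs by (simp add: algebra_simps)
  then show ?thesis using hbp d3H unfolding s_def[symmetric] by simp
qed


end
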